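(* Let $p$ be an odd prime and let $r$ be an integer with $0 \leq r \leq \frac{p-1}{2}$. Then \[ \sum_{j=r}^{\frac{p-1}{2}} \binom{2j}{j}\binom{j}{r} 2^{p-1-2j} \equiv \begin{cases} 0 \pmod{p}, & \text{if } r < \frac{p-1}{2},\\ (-1)^{\frac{p-1}{2}} \pmod{p}, & \text{if } r = \frac{p-1}{2}. \end{cases} \] *)

theory Defs
  imports "HOL-Number_Theory.Number_Theory"
begin

end

theory Submission imports Defs begin
lemma central: "Suc j * (2*Suc j choose Suc j) = 2*(2*j+1)*(2*j choose j)"
  by (metis Suc_eq_plus1 Suc_times_binomial Suc_times_binomial_add
    add_2_eq_Suc add_mult_distrib mult_Suc_right nat_mult_1 one_add_one)
lemma bstep: "Suc j * (n choose Suc j) = (n - j) * (n choose j)"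
  by (metis binomial_absorption binomial_absorb_comp)

lemma lemA:
  fixes p n j :: nat
  assumes p: "prime p" and pn: "p = 2*n+1" and jn: "j \<le> n"
  shows "[int (2*j choose j) = int (n choose j) * (-4)^j] (mod int p)"
  using jn
proof (induction j)
  case 0 then show ?case by simp
next
  case (Suc j)
  define a where "a = int (2*j choose j)"
  define b where "b = int (n choose j) * (-4)^j"
  define a' where "a' = int (2*Suc j choose Suc j)"
  define b' where "b' = int (n choose Suc j) * (-4)^Suc j"
  have IH: "[a = b] (mod int p)" using Suc a_def b_def by simp
  have ea: "int (Suc j) * a' = (4*int j+2) * a"
    proof -
    have "int (Suc j * (2*Suc j choose Suc j)) = int (2*(2*j+1)*(2*j choose j))"
      using central[of j] by (rule arg_cong)
    then show ?thesis unfolding a'_def a_def by (simp only: of_nat_mult) simp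
  qed
  have eb: "int (Suc j) * b' = (4*int j - 4 * int n) * b"
  proof -
    have "int (Suc j) * int (n choose Suc j) = (int n - int j) * int (n choose j)"
      using arg_cong[OF bstep[of j n], of int] Suc.prems by (simp add: of_nat_diff algebra_simps)
    then have h: "int (Suc j) * int (n choose Suc j) = (int n - int j) * int (n choose j)" .
    have "int (Suc j) * b' = (int (Suc j) * int (n choose Suc j)) * ((-4) * (-4)^j)"
      unfolding b'_def by (simp only: power_Suc mult_ac)
    also have "\<dots> = (int n - int j) * int (n choose j) * ((-4) * (-4)^j)" by (simp only: h)
    also have "\<dots> = (4*int j - 4 * int n) * b" unfolding b_def by (simp add: algebra_simps)
    finally show ?thesis .
  qed
  have "int (Suc j) * (a' - b') = (4*int j+2) * a - (4*int j - 4 * int n) * b"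
    using ea eb by (simp add: algebra_simps)
  also have "[\<dots> = (4*int j+2) * a - (4*int j - 4 * int n) * a] (mod int p)"
    using IH by (intro cong_diff cong_refl cong_mult) (auto simp: cong_sym)
  also have "(4*int j+2) * a - (4*int j - 4 * int n) * a = int p * (2*a)"
    using pn by (simp add: algebra_simps)
  also have "[\<dots> = 0] (mod int p)" by (simp add: cong_iff_dvd_diff)
  finally have "int p dvd int (Suc j) * (a' - b')" by (simp add: cong_0_iff)
  moreover have "\<not> int p dvd int (Suc j)"
    using Suc.prems pn by (auto dest: zdvd_imp_le)
  moreover have "prime (int p)" using p by simp
  ultimately have "int p dvd (a' - b')" using prime_dvd_mult_iff by blast
  then show ?case unfolding a'_def b'_def by (simp add: cong_iff_dvd_diff)
qed

lemma lemB:
  fixes n r :: nat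
  assumes "r \<le> n"
  shows "(\<Sum>j=r..n. (-1)^j * int (n choose j) * int (j choose r)) = (if r = n then (-1)^r else 0)"
proof -
  have "(\<Sum>j=r..n. (-1)^j * int (n choose j) * int (j choose r))
      = (\<Sum>k=0..n-r. (-1)^(r+k) * int (n choose (r+k)) * int ((r+k) choose r))"
    using assms by (intro sum.reindex_bij_witness[of _ "\<lambda>k. r + k" "\<lambda>j. j - r"]) auto
  also have "\<dots> = (\<Sum>k=0..n-r. (-1)^r * int (n choose r) * ((-1)^k * int ((n-r) choose k)))"
  proof (intro sum.cong refl)
    fix k assume "k \<in> {0..n-r}"
    have "(n choose (r+k)) * ((r+k) choose r) = (n choose r) * ((n-r) choose k)"
      using choose_mult[of r "r+k" n] \<open>k \<in> {0..n-r}\<close> assms by auto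
    then have "int (n choose (r+k)) * int ((r+k) choose r) = int (n choose r) * int ((n-r) choose k)"
      by (metis of_nat_mult)
    then show "(-1)^(r+k) * int (n choose (r+k)) * int ((r+k) choose r) = (-1)^r * int (n choose r) * ((-1)^k * int ((n-r) choose k))"
      by (simp add: power_add algebra_simps)
  qed
  also have "\<dots> = (-1)^r * int (n choose r) * (\<Sum>k\<le>n-r. (-1)^k * int ((n-r) choose k))"
    by (simp add: sum_distrib_left atLeast0AtMost)
  also have "\<dots> = (if r = n then (-1)^r else 0)"
  proof (cases "r = n")
    case True then show ?thesis by simp
  next
    case False then have pos: "n - r > 0" using assms by simp
    have "(\<Sum>k\<le>n-r. (-1)^k * int ((n-r) choose k)) = 0"
      using choose_alternating_sum[OF pos, where 'a=int] by simp
    with False show ?thesis by simp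
  qed
  finally show ?thesis .
qed
theorem theorem4p2:
  fixes p r :: nat
  assumes "prime p" and "odd p" and "r \<le> (p - 1) div 2"
  shows "[(\<Sum>j=r..(p - 1) div 2. int ((2*j) choose j) * int (j choose r) * 2 ^ (p - 1 - 2*j))
          = (if r < (p - 1) div 2 then 0 else (-1) ^ ((p - 1) div 2))] (mod int p)"
proof -
  define n where "n = (p - 1) div 2"
  have pn: "p = 2*n+1" using assms(2) unfolding n_def by presburger
  have rn: "r \<le> n" using assms(3) n_def by simp
  have "[(\<Sum>j=r..n. int ((2*j) choose j) * int (j choose r) * 2 ^ (p - 1 - 2*j))
      = (\<Sum>j=r..n. int (n choose j) * (-4)^j * int (j choose r) * 2 ^ (p - 1 - 2*j))] (mod int p)"
    by (intro cong_sum cong_mult cong_refl lemA[OF assms(1) pn]) auto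
  also have "(\<Sum>j=r..n. int (n choose j) * (-4)^j * int (j choose r) * 2 ^ (p - 1 - 2*j))
      = (\<Sum>j=r..n. 4^n * ((-1)^j * int (n choose j) * int (j choose r)))"
  proof (intro sum.cong refl)
    fix j assume j: "j \<in> {r..n}"
    have "(-4::int)^j * 2 ^ (p - 1 - 2*j) = (-1)^j * (2^(2*j) * 2^(2*n-2*j))"
      using pn by (simp add: power_mult power_mult_distrib[symmetric])
    also have "\<dots> = (-1)^j * 2^(2*j + (2*n-2*j))" by (simp only: power_add)
    also have "2*j + (2*n-2*j) = 2*n" using j by simp
    also have "(2::int)^(2*n) = 4^n" by (simp add: power_mult)
    finally have "(-4::int)^j * 2 ^ (p - 1 - 2*j) = (-1)^j * 4^n" .
    then show "int (n choose j) * (-4)^j * int (j choose r) * 2 ^ (p - 1 - 2*j)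
      = 4^n * ((-1)^j * int (n choose j) * int (j choose r))"
      by (metis (no_types, lifting) mult.assoc mult.commute mult.left_commute)
  qed
  also have "\<dots> = 4^n * (if r = n then (-1)^r else 0)"
    using lemB[OF rn] by (simp add: sum_distrib_left[symmetric])
  finally have main: "[(\<Sum>j=r..n. int ((2*j) choose j) * int (j choose r) * 2 ^ (p - 1 - 2*j))
      = 4^n * (if r = n then (-1)^r else 0)] (mod int p)" .
  have ferm: "[(4::int)^n = 1] (mod int p)"
  proof -
    have "[(2::nat)^(p-1) = 1] (mod p)"
      using fermat_theorem[OF assms(1)] assms(1) assms(2)
      by (metis dvd_refl even_numeral prime_nat_iff two_is_prime_nat
          prime_dvd_power_nat_iff primes_dvd_imp_eq)
    then have "[int ((2::nat)^(p-1)) = int 1] (mod int p)" using cong_int_iff by blast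
    moreover have "(4::int)^n = int ((2::nat)^(p-1))" using pn by (simp add: power_mult)
    ultimately show ?thesis by simp
  qed
  show ?thesis
  proof (cases "r < n")
    case True then show ?thesis using main n_def by simp
  next
    case False then have "r = n" using rn by simp
    then have "[(\<Sum>j=r..n. int ((2*j) choose j) * int (j choose r) * 2 ^ (p - 1 - 2*j))
      = 4^n * (-1)^n] (mod int p)" using main by simp
    also have "[4^n * (-1)^n = 1 * (-1::int)^n] (mod int p)" by (intro cong_mult ferm cong_refl)
    finally show ?thesis using False n_def by simp
  qed
qed
end
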